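(* For every vector space $\mathcal X$ over $\mathbb K$, the exponential vector space $\mathscr L(\mathcal X)$ has a basis, i.e. $\mathscr L(\mathcal X)\smallsetminus[\mathscr L(\mathcal X)]_0$ has a basis.
   Context: $\mathbb K$ is $\mathbb R$ or $\mathbb C$. An exponential vector space (evs) over a field $K$ is a partially ordered set $(X,\leq)$ with a binary operation $+$ on $X$ and a map $K\times X\to X$, $(\alpha,x)\mapsto \alpha x$, such that: (A1) $(X,+)$ is a commutative semigroup with identity $\theta$; (A2) $x\leq y$ implies $x+z\leq y+z$ and $\alpha x\leq \alpha y$ for all $z\in X$, $\alpha\in K$; (A3) $\alpha(x+y)=\alpha x+\alpha y$, $\alpha(\beta x)=(\alpha\beta)x$, $(\alpha+\beta)x\leq \alpha x+\beta x$, $1x=x$; (A4) $\alpha x=\theta$ iff $\alpha=0$ or $x=\theta$; (A5) $x+(-1)x=\theta$ iff $x\in X_0$, where $X_0:=\{z\in X: y\not\leq z \text{ for all } y\in X\smallsetminus\{z\}\}$ (the set of minimal elements); (A6) for each $x\in X$ there is $p\in X_0$ with $p\leq x$. $\mathscr L(\mathcal X)$ is the set of all linear subspaces of $\mathcal X$ with $\mathcal X_1+\mathcal X_2:=\mathrm{span}(\mathcal X_1\cup\mathcal X_2)$, $\alpha\cdot\mathcal X_1:=\mathcal X_1$ if $\alpha\neq0$ and $0\cdot\mathcal X_1:=\{\theta\}$, and order given by inclusion; it is an evs over $\mathbb K$ with primitive space $\{\{\theta\}\}$. For $x\in X\smallsetminus X_0$ let $L(x):=\{z\in X: z\geq \alpha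 x+p \text{ for some } \alpha\in K\smallsetminus\{0\},\ p\in X_0\}$. A subset $B\subseteq X\smallsetminus X_0$ generates $X\smallsetminus X_0$ if $X\smallsetminus X_0=\bigcup_{b\in B}L(b)$. Elements $x,y\in X\smallsetminus X_0$ are orderly dependent if $x\in L(y)$ or $y\in L(x)$, and orderly independent otherwise; $B$ is orderly independent if any two distinct members are orderly independent. A basis of $X\smallsetminus X_0$ is an orderly independent generating subset. *)

theory Defs
  imports "HOL-Analysis.Analysis"
begin

definition evs_prim :: "'x set \<Rightarrow> ('x \<Rightarrow> 'x \<Rightarrow> bool) \<Rightarrow> 'x set" where
  "evs_prim X le = {z \<in> X. \<forall>y \<in> X - {z}. \<not> le y z}"

definition evs_L :: "'x set \<Rightarrow> ('x \<Rightarrow> 'x \<Rightarrow> bool) \<Rightarrow> ('x \<Rightarrow> 'x \<Rightarrow> 'x)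
    \<Rightarrow> ('k::zero \<Rightarrow> 'x \<Rightarrow> 'x) \<Rightarrow> 'x \<Rightarrow> 'x set" where
  "evs_L X le pl sm x =
     {z \<in> X. \<exists>\<alpha>. \<alpha> \<noteq> 0 \<and> (\<exists>p \<in> evs_prim X le. le (pl (sm \<alpha> x) p) z)}"

definition evs_generates :: "'x set \<Rightarrow> ('x \<Rightarrow> 'x \<Rightarrow> bool) \<Rightarrow> ('x \<Rightarrow> 'x \<Rightarrow> 'x)
    \<Rightarrow> ('k::zero \<Rightarrow> 'x \<Rightarrow> 'x) \<Rightarrow> 'x set \<Rightarrow> bool" where
  "evs_generates X le pl sm B \<longleftrightarrow>
     B \<subseteq> X - evs_prim X le \<and>
     X - evs_prim X le = (\<Union>b \<in> B. evs_L X le pl sm b)"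

definition evs_orderly_independent :: "'x set \<Rightarrow> ('x \<Rightarrow> 'x \<Rightarrow> bool) \<Rightarrow> ('x \<Rightarrow> 'x \<Rightarrow> 'x)
    \<Rightarrow> ('k::zero \<Rightarrow> 'x \<Rightarrow> 'x) \<Rightarrow> 'x \<Rightarrow> 'x \<Rightarrow> bool" where
  "evs_orderly_independent X le pl sm x y \<longleftrightarrow>
     \<not> (x \<in> evs_L X le pl sm y \<or> y \<in> evs_L X le pl sm x)"

definition evs_basis :: "'x set \<Rightarrow> ('x \<Rightarrow> 'x \<Rightarrow> bool) \<Rightarrow> ('x \<Rightarrow> 'x \<Rightarrow> 'x)
    \<Rightarrow> ('k::zero \<Rightarrow> 'x \<Rightarrow> 'x) \<Rightarrow> 'x set \<Rightarrow> bool" where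
  "evs_basis X le pl sm B \<longleftrightarrow>
     B \<subseteq> X - evs_prim X le \<and>
     (\<forall>x \<in> B. \<forall>y \<in> B. x \<noteq> y \<longrightarrow> evs_orderly_independent X le pl sm x y) \<and>
     evs_generates X le pl sm B"

definition Lsub_carrier :: "('k::comm_ring_1 \<Rightarrow> 'v \<Rightarrow> 'v::ab_group_add) \<Rightarrow> 'v set set" where
  "Lsub_carrier sc = {S. module.subspace sc S}"

definition Lsub_le :: "'v set \<Rightarrow> 'v set \<Rightarrow> bool" where
  "Lsub_le S T \<longleftrightarrow> S \<subseteq> T"

definition Lsub_plus :: "('k::comm_ring_1 \<Rightarrow> 'v \<Rightarrow> 'v::ab_group_add) \<Rightarrow> 'v set \<Rightarrow> 'v set \<Rightarrow> 'v set" where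
  "Lsub_plus sc S T = module.span sc (S \<union> T)"

definition Lsub_smult :: "'k::zero \<Rightarrow> 'v::zero set \<Rightarrow> 'v set" where
  "Lsub_smult \<alpha> S = (if \<alpha> = 0 then {0} else S)"

definition Lsub_has_basis :: "('k::field \<Rightarrow> 'v \<Rightarrow> 'v::ab_group_add) \<Rightarrow> bool" where
  "Lsub_has_basis sc \<longleftrightarrow>
     (\<exists>B. evs_basis (Lsub_carrier sc) Lsub_le (Lsub_plus sc)
            (Lsub_smult :: 'k \<Rightarrow> 'v set \<Rightarrow> 'v set) B)"

end

theory Submission
  imports Defs
begin

context vector_space
begin

lemma prim_eq: "evs_prim (Lsub_carrier scale) Lsub_le = {{0}}"
proof (rule set_eqI, rule iffI)
  fix z assume "z \<in> evs_prim (Lsub_carrier scale) Lsub_le"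
  then have z: "subspace z" "\<forall>y. subspace y \<and> y \<noteq> z \<longrightarrow> \<not> y \<subseteq> z"
    unfolding evs_prim_def Lsub_carrier_def Lsub_le_def by auto
  have "{0} \<subseteq> z" using subspace_0[OF z(1)] by simp
  then have "z = {0}" using z(2) subspace_single_0 by blast
  then show "z \<in> {{0}}" by simp
next
  fix z assume "z \<in> {{0::'b}}"
  then have z: "z = {0}" by simp
  have "\<forall>y. subspace y \<and> y \<noteq> z \<longrightarrow> \<not> y \<subseteq> z"
  proof (intro allI impI)
    fix y assume y: "subspace y \<and> y \<noteq> z"
    then have "0 \<in> y" using subspace_0 by blast
    then show "\<not> y \<subseteq> z" using y z by blast
  qed
  then show "z \<in> evs_prim (Lsub_carrier scale) Lsub_le"
    unfolding evs_prim_def Lsub_carrier_def Lsub_le_def using z subspace_single_0 by blast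
qed

lemma L_eq:
  assumes "subspace x"
  shows "evs_L (Lsub_carrier scale) Lsub_le (Lsub_plus scale) (Lsub_smult :: 'a \<Rightarrow> 'b set \<Rightarrow> 'b set) x
     = {z. subspace z \<and> x \<subseteq> z}"
proof -
  have sp: "span (x \<union> {0}) = x" using assms by simp
  show ?thesis
  proof (rule set_eqI, rule iffI)
    fix z assume "z \<in> evs_L (Lsub_carrier scale) Lsub_le (Lsub_plus scale) (Lsub_smult :: 'a \<Rightarrow> 'b set \<Rightarrow> 'b set) x"
    then have a: "subspace z" "span (x \<union> {0}) \<subseteq> z"
      unfolding evs_L_def prim_eq unfolding Lsub_carrier_def Lsub_le_def Lsub_plus_def Lsub_smult_def by auto
    then show "z \<in> {z. subspace z \<and> x \<subseteq> z}" using a span_superset[of x] by auto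
  next
    fix z assume "z \<in> {z. subspace z \<and> x \<subseteq> z}"
    then have z: "subspace z" "span (x \<union> {0}) \<subseteq> z" using sp span_minimal by auto
    have "(1::'a) \<noteq> 0" by simp
    then show "z \<in> evs_L (Lsub_carrier scale) Lsub_le (Lsub_plus scale) (Lsub_smult :: 'a \<Rightarrow> 'b set \<Rightarrow> 'b set) x"
      unfolding evs_L_def prim_eq unfolding Lsub_carrier_def Lsub_le_def Lsub_plus_def Lsub_smult_def
      using z by (intro CollectI conjI exI[of _ 1]) auto
  qed
qed

lemma line_sub:
  assumes "v \<noteq> 0" "w \<noteq> 0" "span {v} \<subseteq> span {w}"
  shows "span {v} = span {w}"
proof -
  have "v \<in> span {w}" using assms(3) span_base by blast
  then obtain c where c: "v = c *s w" by (auto simp: span_singleton)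
  have "c \<noteq> 0" using c assms(1) by auto
  then have "w = inverse c *s v" using c by simp
  then have "w \<in> span {v}" by (auto simp: span_singleton)
  then have "span {w} \<subseteq> span {v}" by (simp add: span_minimal)
  then show ?thesis using assms(3) by auto
qed

lemma has_basis: "Lsub_has_basis scale"
proof -
  define B where "B = {span {v} | v. v \<noteq> 0}"
  have prim: "evs_prim (Lsub_carrier scale) Lsub_le = {{0}}" by (rule prim_eq)
  have Bsub: "B \<subseteq> Lsub_carrier scale - evs_prim (Lsub_carrier scale) Lsub_le"
  proof
    fix b assume "b \<in> B"
    then obtain v where v: "v \<noteq> 0" "b = span {v}" unfolding B_def by auto
    have "v \<in> b" using v span_base by blast
    then have "b \<noteq> {0}" using v by auto
    then show "b \<in> Lsub_carrier scale - evs_prim (Lsub_carrier scale) Lsub_le"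
      using v prim unfolding Lsub_carrier_def by auto
  qed
  have LB: "\<And>b. b \<in> B \<Longrightarrow> evs_L (Lsub_carrier scale) Lsub_le (Lsub_plus scale) (Lsub_smult :: 'a \<Rightarrow> 'b set \<Rightarrow> 'b set) b
     = {z. subspace z \<and> b \<subseteq> z}"
    unfolding B_def using L_eq by auto
  have indep: "\<forall>x \<in> B. \<forall>y \<in> B. x \<noteq> y \<longrightarrow> evs_orderly_independent (Lsub_carrier scale) Lsub_le (Lsub_plus scale) (Lsub_smult :: 'a \<Rightarrow> 'b set \<Rightarrow> 'b set) x y"
  proof (intro ballI impI)
    fix x y assume xy: "x \<in> B" "y \<in> B" "x \<noteq> y"
    then obtain v w where "v \<noteq> 0" "x = span {v}" "w \<noteq> 0" "y = span {w}" unfolding B_def by auto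
    then have "\<not> x \<subseteq> y" "\<not> y \<subseteq> x" using line_sub xy(3) by metis+
    then show "evs_orderly_independent (Lsub_carrier scale) Lsub_le (Lsub_plus scale) (Lsub_smult :: 'a \<Rightarrow> 'b set \<Rightarrow> 'b set) x y"
      unfolding evs_orderly_independent_def using LB xy by auto
  qed
  have gen: "Lsub_carrier scale - evs_prim (Lsub_carrier scale) Lsub_le = (\<Union>b \<in> B. evs_L (Lsub_carrier scale) Lsub_le (Lsub_plus scale) (Lsub_smult :: 'a \<Rightarrow> 'b set \<Rightarrow> 'b set) b)"
  proof
    show "Lsub_carrier scale - evs_prim (Lsub_carrier scale) Lsub_le \<subseteq> (\<Union>b \<in> B. evs_L (Lsub_carrier scale) Lsub_le (Lsub_plus scale) (Lsub_smult :: 'a \<Rightarrow> 'b set \<Rightarrow> 'b set) b)"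
    proof
      fix z assume z: "z \<in> Lsub_carrier scale - evs_prim (Lsub_carrier scale) Lsub_le"
      then have sz: "subspace z" and nz: "z \<noteq> {0}" using prim unfolding Lsub_carrier_def by auto
      then obtain v where v: "v \<in> z" "v \<noteq> 0" using subspace_0 by blast
      have "span {v} \<subseteq> z" using v sz by (simp add: span_minimal)
      moreover have "span {v} \<in> B" using v unfolding B_def by auto
      ultimately show "z \<in> (\<Union>b \<in> B. evs_L (Lsub_carrier scale) Lsub_le (Lsub_plus scale) (Lsub_smult :: 'a \<Rightarrow> 'b set \<Rightarrow> 'b set) b)"
        using LB sz by blast
    qed
    show "(\<Union>b \<in> B. evs_L (Lsub_carrier scale) Lsub_le (Lsub_plus scale) (Lsub_smult :: 'a \<Rightarrow> 'b set \<Rightarrow> 'b set) b) \<subseteq> Lsub_carrier scale - evs_prim (Lsub_carrier scale) Lsub_le"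
    proof
      fix z assume "z \<in> (\<Union>b \<in> B. evs_L (Lsub_carrier scale) Lsub_le (Lsub_plus scale) (Lsub_smult :: 'a \<Rightarrow> 'b set \<Rightarrow> 'b set) b)"
      then obtain b where b: "b \<in> B" "subspace z" "b \<subseteq> z" using LB by blast
      have "b \<noteq> {0}" "subspace b" using b(1) Bsub prim unfolding Lsub_carrier_def by auto
      then have "z \<noteq> {0}" using b(3) subspace_0 by blast
      then show "z \<in> Lsub_carrier scale - evs_prim (Lsub_carrier scale) Lsub_le"
        using b(2) prim unfolding Lsub_carrier_def by auto
    qed
  qed
  show ?thesis unfolding Lsub_has_basis_def evs_basis_def evs_generates_def
    using Bsub indep gen by blast
qed

end

theorem mainTheorem12:
  fixes scaleR' :: "real \<Rightarrow> 'v::ab_group_add \<Rightarrow> 'v"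
    and scaleC' :: "complex \<Rightarrow> 'w::ab_group_add \<Rightarrow> 'w"
  shows "(vector_space scaleR' \<longrightarrow> Lsub_has_basis scaleR')
       \<and> (vector_space scaleC' \<longrightarrow> Lsub_has_basis scaleC')"
  by (simp add: vector_space.has_basis)

end
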